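(* Let $S$ be a simple $(l,r)$-framed algebra and $C_S=\{\alpha\in\mathbb{Z}_2^{l+r}:S_{(0,\alpha)}\neq0\}$. Then $\dim S_{(0,\alpha)}=1$ for every $\alpha\in C_S$.
   Context: Let $\mathrm{IS}=\{0,\frac12,\frac1{16}\}$ with fusion rule $\star$ (values are subsets): $0\star h=h\star0=\{h\}$, $\frac12\star\frac12=\{0\}$, $\frac12\star\frac1{16}=\frac1{16}\star\frac12=\{\frac1{16}\}$, $\frac1{16}\star\frac1{16}=\{0,\frac12\}$; $A(h_0,h_1,h_2,h_3)=\{h: h\in h_2\star h_3,\ h_0\in h_1\star h\}$. For $h\in A(h_0,h_1,h_2,h_3)$, $h'\in A(h_0,h_2,h_1,h_3)$ define $B^{h,h'}_{h_0,h_1,h_2,h_3}$: $B_{*,0,*,*}=B_{*,*,0,*}=1$; $B_{*,\frac12,\frac12,*}=-1$; $B_{a,\frac12,\frac1{16},a'}=B_{a,\frac1{16},\frac12,a'}=i$ if $a$ or $a'$ is $\frac12$, else $-i$; $B^{b,b'}_{a,\frac1{16},\frac1{16},a'}=e^{-\pi i/8}\cdot\{1$ if $a,a'\ne\frac1{16},a=a'$; $i$ if $a,a'\neq\frac1{16},a\ne a'$; $\frac{1+i}2$ if $a=a'=\frac1{16},b=b'$; $\frac{1-i}2$ if $a=a'=\frac1{16},b\neq b'\}$. $\mathrm{IS}^{(l,r)}=\mathrm{IS}^l\times\mathrm{IS}^r$, $\lambda=(h_1,..,h_l,\bar h_1,..,\bar h_r)$, $s(\lambda)=\sum h_i-\sum\bar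 h_j$; $\star$, $A$ componentwise; $B^{\lambda,\lambda'}_{\lambda^0,\dots,\lambda^3}=\prod_{i\le l}B^{h_i,h'_i}_{h^0_i,\dots,h^3_i}\prod_{j\le r}\overline{B^{\bar h_j,\bar h'_j}_{\bar h^0_j,\dots,\bar h^3_j}}$. An $(l,r)$-framed algebra: finite-dimensional $\mathrm{IS}^{(l,r)}$-graded $S=\bigoplus S_\lambda$ over $\mathbb{C}$ with bilinear product, nonzero $1\in S_0$, $a\cdot_\lambda b$ the $S_\lambda$-component of $a\cdot b$, satisfying (FA1) $S_\lambda=0$ unless $s(\lambda)\in\mathbb{Z}$; (FA2) $S_0=\mathbb{C}1$, $1$ a two-sided unit; (FA3) $S_{\lambda^1}\cdot S_{\lambda^2}\subset\bigoplus_{\lambda\in\lambda^1\star\lambda^2}S_\lambda$; (FA4) $a_2\cdot_{\lambda^0}(a_1\cdot_{\lambda'}a_3)=\sum_{\lambda\in A(\lambda^0,\lambda^1,\lambda^2,\lambda^3)}B^{\lambda,\lambda'}_{\lambda^0,\lambda^1,\lambda^2,\lambda^3}a_1\cdot_{\lambda^0}(a_2\cdot_\lambda a_3)$ for $a_i\in S_{\lambda^i}$, $\lambda'\in A(\lambda^0,\lambda^2,\lambda^1,\lambda^3)$. Ideal: graded subspace $M$ with $S\cdot M\subset M$; simple: only ideals $0$ and $S$. Identify $\mathrm{IS}$ with $\{(d,c)\in\mathbb{Z}_2^2:dc=0\}$ via $0\leftrightarrow(0,0)$, $\frac12\leftrightarrow(0,1)$, $\frac1{16}\leftrightarrow(1,0)$,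 and componentwise $\mathrm{IS}^{(l,r)}$ with pairs $(d,c)\in(\mathbb{Z}_2^{l+r})^2$, $dc=0$. *)

theory Defs
  imports Complex_Main
begin

datatype IS = H0 | Hhalf | H16

fun ISval :: "IS \<Rightarrow> real" where
  "ISval H0 = 0" | "ISval Hhalf = 1/2" | "ISval H16 = 1/16"

fun fus :: "IS \<Rightarrow> IS \<Rightarrow> IS set" where
  "fus H0 h = {h}"
| "fus h H0 = {h}"
| "fus Hhalf Hhalf = {H0}"
| "fus Hhalf H16 = {H16}"
| "fus H16 Hhalf = {H16}"
| "fus H16 H16 = {H0, Hhalf}"

definition Aset :: "IS \<Rightarrow> IS \<Rightarrow> IS \<Rightarrow> IS \<Rightarrow> IS set" where
  "Aset h0 h1 h2 h3 = {h. h \<in> fus h2 h3 \<and> h0 \<in> fus h1 h}"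

text \<open>Bc h h' h0 h1 h2 h3 is the braiding coefficient B with upper indices h h'
  and lower indices h0 h1 h2 h3 (only meaningful for h in Aset h0 h1 h2 h3 and
  h' in Aset h0 h2 h1 h3; unspecified cases are set to 0).\<close>
definition Bc :: "IS \<Rightarrow> IS \<Rightarrow> IS \<Rightarrow> IS \<Rightarrow> IS \<Rightarrow> IS \<Rightarrow> complex" where
  "Bc b b' a h1 h2 a' =
    (if h1 = H0 \<or> h2 = H0 then 1
     else if h1 = Hhalf \<and> h2 = Hhalf then -1
     else if (h1 = Hhalf \<and> h2 = H16) \<or> (h1 = H16 \<and> h2 = Hhalf) then
       (if a = Hhalf \<or> a' = Hhalf then \<i> else - \<i>)
     else \<comment> \<open>h1 = h2 = 1/16\<close>
       cis (- pi / 8) *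
       (if a \<noteq> H16 \<and> a' \<noteq> H16 \<and> a = a' then 1
        else if a \<noteq> H16 \<and> a' \<noteq> H16 \<and> a \<noteq> a' then \<i>
        else if a = H16 \<and> a' = H16 \<and> b = b' then (1 + \<i>) / 2
        else if a = H16 \<and> a' = H16 \<and> b \<noteq> b' then (1 - \<i>) / 2
        else 0))"

text \<open>An element of IS^(l,r) is encoded as a function nat => IS which is H0
  outside {0..<l+r}; indices i < l are the chiral ones h_1..h_l, indices
  l <= i < l+r are the antichiral ones.\<close>
definition Lam :: "nat \<Rightarrow> nat \<Rightarrow> (nat \<Rightarrow> IS) set" where
  "Lam l r = {la. \<forall>i\<ge>l+r. la i = H0}"

definition lam0 :: "nat \<Rightarrow> IS" where "lam0 = (\<lambda>_. H0)"

definition sw :: "nat \<Rightarrow> nat \<Rightarrow> (nat \<Rightarrow> IS) \<Rightarrow> real" where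
  "sw l r la = (\<Sum>i<l. ISval (la i)) - (\<Sum>i\<in>{l..<l+r}. ISval (la i))"

definition fusL :: "nat \<Rightarrow> nat \<Rightarrow> (nat \<Rightarrow> IS) \<Rightarrow> (nat \<Rightarrow> IS) \<Rightarrow> (nat \<Rightarrow> IS) set" where
  "fusL l r la1 la2 = {la \<in> Lam l r. \<forall>i<l+r. la i \<in> fus (la1 i) (la2 i)}"

definition AL :: "nat \<Rightarrow> nat \<Rightarrow> (nat \<Rightarrow> IS) \<Rightarrow> (nat \<Rightarrow> IS) \<Rightarrow> (nat \<Rightarrow> IS) \<Rightarrow> (nat \<Rightarrow> IS)
                  \<Rightarrow> (nat \<Rightarrow> IS) set" where
  "AL l r la0 la1 la2 la3 = {la \<in> Lam l r. \<forall>i<l+r. la i \<in> Aset (la0 i) (la1 i) (la2 i) (la3 i)}"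

definition BL :: "nat \<Rightarrow> nat \<Rightarrow> (nat \<Rightarrow> IS) \<Rightarrow> (nat \<Rightarrow> IS) \<Rightarrow> (nat \<Rightarrow> IS) \<Rightarrow> (nat \<Rightarrow> IS)
                  \<Rightarrow> (nat \<Rightarrow> IS) \<Rightarrow> (nat \<Rightarrow> IS) \<Rightarrow> complex" where
  "BL l r la la' la0 la1 la2 la3 =
     (\<Prod>i<l. Bc (la i) (la' i) (la0 i) (la1 i) (la2 i) (la3 i)) *
     (\<Prod>i\<in>{l..<l+r}. cnj (Bc (la i) (la' i) (la0 i) (la1 i) (la2 i) (la3 i)))"

text \<open>The algebra S is the whole carrier type 'v, a complex vector space with
  scalar multiplication sc; Sc la is the homogeneous subspace S_la.\<close>
definition graded :: "(complex \<Rightarrow> 'v::ab_group_add \<Rightarrow> 'v) \<Rightarrow> nat \<Rightarrow> nat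
                      \<Rightarrow> ((nat \<Rightarrow> IS) \<Rightarrow> 'v set) \<Rightarrow> bool" where
  "graded sc l r Sc \<longleftrightarrow>
     (\<forall>la. module.subspace sc (Sc la)) \<and>
     (\<forall>la. la \<notin> Lam l r \<longrightarrow> Sc la = {0}) \<and>
     (\<forall>x. \<exists>!f. (\<forall>la\<in>Lam l r. f la \<in> Sc la) \<and> (\<forall>la. la \<notin> Lam l r \<longrightarrow> f la = 0)
               \<and> x = sum f (Lam l r))"

definition comp :: "nat \<Rightarrow> nat \<Rightarrow> ((nat \<Rightarrow> IS) \<Rightarrow> 'v::ab_group_add set) \<Rightarrow> (nat \<Rightarrow> IS)
                    \<Rightarrow> 'v \<Rightarrow> 'v" where
  "comp l r Sc la x = (THE f. (\<forall>\<mu>\<in>Lam l r. f \<mu> \<in> Sc \<mu>) \<and> (\<forall>\<mu>. \<mu> \<notin> Lam l r \<longrightarrow> f \<mu> = 0)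
                               \<and> x = sum f (Lam l r)) la"

definition framed_algebra ::
  "nat \<Rightarrow> nat \<Rightarrow> (complex \<Rightarrow> 'v::ab_group_add \<Rightarrow> 'v) \<Rightarrow> ((nat \<Rightarrow> IS) \<Rightarrow> 'v set)
   \<Rightarrow> ('v \<Rightarrow> 'v \<Rightarrow> 'v) \<Rightarrow> 'v \<Rightarrow> bool" where
  "framed_algebra l r sc Sc mult one \<longleftrightarrow>
     vector_space sc \<and>
     (\<exists>B. finite B \<and> module.span sc B = UNIV) \<and>
     graded sc l r Sc \<and>
     (\<forall>a. Vector_Spaces.linear sc sc (mult a)) \<and>
     (\<forall>b. Vector_Spaces.linear sc sc (\<lambda>a. mult a b)) \<and>
     one \<noteq> 0 \<and> one \<in> Sc lam0 \<and>
     \<comment> \<open>FA1\<close>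
     (\<forall>la\<in>Lam l r. sw l r la \<notin> \<int> \<longrightarrow> Sc la = {0}) \<and>
     \<comment> \<open>FA2\<close>
     Sc lam0 = module.span sc {one} \<and>
     (\<forall>a. mult one a = a \<and> mult a one = a) \<and>
     \<comment> \<open>FA3\<close>
     (\<forall>la1\<in>Lam l r. \<forall>la2\<in>Lam l r. \<forall>a\<in>Sc la1. \<forall>b\<in>Sc la2. \<forall>la\<in>Lam l r.
        la \<notin> fusL l r la1 la2 \<longrightarrow> comp l r Sc la (mult a b) = 0) \<and>
     \<comment> \<open>FA4\<close>
     (\<forall>la0\<in>Lam l r. \<forall>la1\<in>Lam l r. \<forall>la2\<in>Lam l r. \<forall>la3\<in>Lam l r.
      \<forall>a1\<in>Sc la1. \<forall>a2\<in>Sc la2. \<forall>a3\<in>Sc la3. \<forall>la'\<in>AL l r la0 la2 la1 la3.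
        comp l r Sc la0 (mult a2 (comp l r Sc la' (mult a1 a3))) =
        (\<Sum>la\<in>AL l r la0 la1 la2 la3.
           sc (BL l r la la' la0 la1 la2 la3) (comp l r Sc la0 (mult a1 (comp l r Sc la (mult a2 a3))))))"

definition graded_subspace ::
  "nat \<Rightarrow> nat \<Rightarrow> (complex \<Rightarrow> 'v::ab_group_add \<Rightarrow> 'v) \<Rightarrow> ((nat \<Rightarrow> IS) \<Rightarrow> 'v set) \<Rightarrow> 'v set \<Rightarrow> bool" where
  "graded_subspace l r sc Sc M \<longleftrightarrow>
     module.subspace sc M \<and> (\<forall>x\<in>M. \<forall>la. comp l r Sc la x \<in> M)"

definition fa_ideal ::
  "nat \<Rightarrow> nat \<Rightarrow> (complex \<Rightarrow> 'v::ab_group_add \<Rightarrow> 'v) \<Rightarrow> ((nat \<Rightarrow> IS) \<Rightarrow> 'v set)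
   \<Rightarrow> ('v \<Rightarrow> 'v \<Rightarrow> 'v) \<Rightarrow> 'v set \<Rightarrow> bool" where
  "fa_ideal l r sc Sc mult M \<longleftrightarrow>
     graded_subspace l r sc Sc M \<and> (\<forall>a. \<forall>x\<in>M. mult a x \<in> M)"

definition simple_framed_algebra ::
  "nat \<Rightarrow> nat \<Rightarrow> (complex \<Rightarrow> 'v::ab_group_add \<Rightarrow> 'v) \<Rightarrow> ((nat \<Rightarrow> IS) \<Rightarrow> 'v set)
   \<Rightarrow> ('v \<Rightarrow> 'v \<Rightarrow> 'v) \<Rightarrow> 'v \<Rightarrow> bool" where
  "simple_framed_algebra l r sc Sc mult one \<longleftrightarrow>
     framed_algebra l r sc Sc mult one \<and>
     (\<forall>M. fa_ideal l r sc Sc mult M \<longrightarrow> M = {0} \<or> M = UNIV)"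

text \<open>Elements of Z_2^(l+r) are encoded as bool-valued functions vanishing
  (False) outside {0..<l+r}; (0,\<alpha>) is the index with d = 0 and c = \<alpha>, i.e.
  entry 1/2 where \<alpha> is True and 0 elsewhere.\<close>
definition Z2vec :: "nat \<Rightarrow> (nat \<Rightarrow> bool) set" where
  "Z2vec n = {\<alpha>. \<forall>i\<ge>n. \<not> \<alpha> i}"

definition zero_c :: "(nat \<Rightarrow> bool) \<Rightarrow> nat \<Rightarrow> IS" where
  "zero_c \<alpha> = (\<lambda>i. if \<alpha> i then Hhalf else H0)"

definition code_CS :: "nat \<Rightarrow> nat \<Rightarrow> ((nat \<Rightarrow> IS) \<Rightarrow> 'v::zero set) \<Rightarrow> (nat \<Rightarrow> bool) set" where
  "code_CS l r Sc = {\<alpha> \<in> Z2vec (l + r). Sc (zero_c \<alpha>) \<noteq> {0}}"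

end

theory Submission imports Defs begin

lemma finite_IS: "finite (UNIV :: IS set)"
proof -
  have "UNIV = {H0, Hhalf, H16}" by (auto intro: IS.exhaust)
  then show ?thesis by (metis finite.emptyI finite.insertI)
qed

lemma finite_Lam: "finite (Lam l r)"
proof -
  have "Lam l r = {f. \<forall>x. (x \<in> {..<l+r} \<longrightarrow> f x \<in> UNIV) \<and> (x \<notin> {..<l+r} \<longrightarrow> f x = H0)}"
    by (auto simp: Lam_def)
  then show ?thesis using finite_set_of_finite_funs[OF _ finite_IS, of "{..<l+r}" H0] by simp
qed

lemma fus_H0: "H0 \<in> fus h h' \<longleftrightarrow> h = h'"
  by (cases h; cases h') auto

lemma fus_right0: "fus h H0 = {h}"
  by (cases h) auto

lemma lam0_Lam: "lam0 \<in> Lam l r" by (simp add: Lam_def lam0_def)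

lemma lam0_fusL: "la1 \<in> Lam l r \<Longrightarrow> la2 \<in> Lam l r \<Longrightarrow> lam0 \<in> fusL l r la1 la2 \<longleftrightarrow> la1 = la2"
proof
  assume a: "la1 \<in> Lam l r" "la2 \<in> Lam l r" "lam0 \<in> fusL l r la1 la2"
  show "la1 = la2"
  proof
    fix x show "la1 x = la2 x"
      using a by (cases "x < l + r") (auto simp: fusL_def Lam_def lam0_def fus_H0)
  qed
next
  assume "la1 \<in> Lam l r" "la2 \<in> Lam l r" "la1 = la2"
  then show "lam0 \<in> fusL l r la1 la2" by (auto simp: fusL_def Lam_def lam0_def fus_H0)
qed

lemma AL_iff: "la \<in> AL l r la0 la1 la2 la3 \<longleftrightarrow> la \<in> fusL l r la2 la3 \<and> (\<forall>i<l+r. la0 i \<in> fus (la1 i) (la i))"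
  by (auto simp: AL_def fusL_def Aset_def)


lemma Bc_nz: "h \<noteq> H16 \<Longrightarrow> Bc b b' h h h h \<noteq> 0"
  by (cases h) (auto simp: Bc_def)

lemma zero_c_nz: "zero_c al i \<noteq> H16" by (simp add: zero_c_def)

lemma BL_nz: "BL l r lam0 lam0 (zero_c al) (zero_c al) (zero_c al) (zero_c al) \<noteq> 0"
  unfolding BL_def using Bc_nz[OF zero_c_nz] by (simp add: prod_zero_iff)

locale FA =
  fixes l r :: nat and sc :: "complex \<Rightarrow> 'v::ab_group_add \<Rightarrow> 'v"
    and Sc :: "(nat \<Rightarrow> IS) \<Rightarrow> 'v set"
    and mult :: "'v \<Rightarrow> 'v \<Rightarrow> 'v" and one :: 'v
  assumes fa: "framed_algebra l r sc Sc mult one"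
begin

lemma vs: "vector_space sc" using fa by (simp add: framed_algebra_def)

sublocale vector_space sc by (rule vs)

lemma gr: "graded sc l r Sc" using fa by (simp add: framed_algebra_def)
lemma subsp: "subspace (Sc la)" using gr by (simp add: graded_def)
lemma Sc_out: "la \<notin> Lam l r \<Longrightarrow> Sc la = {0}" using gr by (simp add: graded_def)
lemma lin1: "module_hom sc sc (mult a)" using fa by (simp add: framed_algebra_def linear_iff_module_hom)
lemma lin2: "module_hom sc sc (\<lambda>a. mult a b)" using fa by (simp add: framed_algebra_def linear_iff_module_hom)
lemma one_nz: "one \<noteq> 0" using fa unfolding framed_algebra_def by blast
lemma one_in: "one \<in> Sc lam0" using fa unfolding framed_algebra_def by blast
lemma S0: "Sc lam0 = span {one}" using fa unfolding framed_algebra_def by blast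
lemma unit1: "mult one a = a" using fa unfolding framed_algebra_def by blast
lemma unit2: "mult a one = a" using fa unfolding framed_algebra_def by blast
lemma FA1: "la\<in>Lam l r \<Longrightarrow> sw l r la \<notin> \<int> \<Longrightarrow> Sc la = {0}"
  using fa unfolding framed_algebra_def by blast
lemma FA3: "la1\<in>Lam l r \<Longrightarrow> la2\<in>Lam l r \<Longrightarrow> a\<in>Sc la1 \<Longrightarrow> b\<in>Sc la2 \<Longrightarrow> la\<in>Lam l r \<Longrightarrow>
        la \<notin> fusL l r la1 la2 \<Longrightarrow> comp l r Sc la (mult a b) = 0"
  using fa unfolding framed_algebra_def by blast
lemma FA4: "la0\<in>Lam l r \<Longrightarrow> la1\<in>Lam l r \<Longrightarrow> la2\<in>Lam l r \<Longrightarrow> la3\<in>Lam l r \<Longrightarrow>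
      a1\<in>Sc la1 \<Longrightarrow> a2\<in>Sc la2 \<Longrightarrow> a3\<in>Sc la3 \<Longrightarrow> la' \<in> AL l r la0 la2 la1 la3 \<Longrightarrow>
        comp l r Sc la0 (mult a2 (comp l r Sc la' (mult a1 a3))) =
        (\<Sum>la\<in>AL l r la0 la1 la2 la3.
           sc (BL l r la la' la0 la1 la2 la3) (comp l r Sc la0 (mult a1 (comp l r Sc la (mult a2 a3)))))"
  using fa unfolding framed_algebra_def by blast

abbreviation "Dc f x \<equiv> (\<forall>la\<in>Lam l r. f la \<in> Sc la) \<and> (\<forall>la. la \<notin> Lam l r \<longrightarrow> f la = 0) \<and> x = sum f (Lam l r)"

lemma ex1D: "\<exists>!f. Dc f x" using gr by (simp add: graded_def)

lemma comp_D: "Dc (\<lambda>la. comp l r Sc la x) x"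
  unfolding comp_def using theI'[OF ex1D[of x]] by simp

lemma comp_unique: "Dc f x \<Longrightarrow> comp l r Sc la x = f la"
  unfolding comp_def using the1_equality[OF ex1D[of x]] by simp

lemma comp_in: "comp l r Sc la x \<in> Sc la"
  using comp_D[of x] Sc_out[of la] by (cases "la \<in> Lam l r") auto

lemma comp_sum: "x = (\<Sum>la\<in>Lam l r. comp l r Sc la x)"
  using comp_D[of x] by simp

lemma comp_hom: assumes "y \<in> Sc mu" shows "comp l r Sc la y = (if la = mu then y else 0)"
proof (cases "mu \<in> Lam l r")
  case True
  show ?thesis
    apply (rule comp_unique)
    using True assms subspace_0[OF subsp] finite_Lam by (auto simp: if_distrib cong: if_cong)
next
  case False
  then have "y = 0" using assms Sc_out by auto
  have "Dc (\<lambda>_. 0) y" using \<open>y = 0\<close> subspace_0[OF subsp] by auto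
  then have "comp l r Sc la y = 0" by (rule comp_unique)
  then show ?thesis using \<open>y = 0\<close> by auto
qed

lemma comp_add: "comp l r Sc la (x + y) = comp l r Sc la x + comp l r Sc la y"
proof -
  have "Dc (\<lambda>la. comp l r Sc la x + comp l r Sc la y) (x + y)"
    using comp_D[of x] comp_D[of y] subspace_add[OF subsp]
    by (auto simp: sum.distrib)
  then show ?thesis by (rule comp_unique)
qed

lemma comp_scale: "comp l r Sc la (sc c x) = sc c (comp l r Sc la x)"
proof -
  have "Dc (\<lambda>la. sc c (comp l r Sc la x)) (sc c x)"
  proof (intro conjI)
    show "sc c x = (\<Sum>la\<in>Lam l r. sc c (comp l r Sc la x))"
      using comp_sum[of x] scale_sum_right[of c "\<lambda>la. comp l r Sc la x" "Lam l r"] by metis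
  qed (use comp_D[of x] subspace_scale[OF subsp] in auto)
  then show ?thesis by (rule comp_unique)
qed

lemma comp_lin: "module_hom sc sc (comp l r Sc la)"
  by (simp add: module_hom_def module_hom_axioms_def comp_add comp_scale module_axioms)


lemma m_zero: "mult a 0 = 0" using module_hom.zero[OF lin1] .
lemma m_add: "mult a (x + y) = mult a x + mult a y" using module_hom.add[OF lin1] .
lemma m_scale: "mult a (sc c x) = sc c (mult a x)" using module_hom.scale[OF lin1] .
lemma c_zero: "comp l r Sc la 0 = 0" using module_hom.zero[OF comp_lin] .

lemma AL_Lam: "la \<in> AL l r la0 la1 la2 la3 \<Longrightarrow> la \<in> Lam l r" by (simp add: AL_def)

lemma fusL_right0: assumes "la2 \<in> Lam l r" shows "la \<in> fusL l r la2 lam0 \<longleftrightarrow> la = la2"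
proof
  assume a: "la \<in> fusL l r la2 lam0"
  show "la = la2"
  proof
    fix x show "la x = la2 x"
      using a assms by (cases "x < l + r") (auto simp: fusL_def Lam_def lam0_def fus_right0)
  qed
next
  assume "la = la2" then show "la \<in> fusL l r la2 lam0"
    using assms by (auto simp: fusL_def lam0_def fus_right0)
qed

lemma sum_sub_single: "A \<subseteq> {x} \<Longrightarrow> sum f A = (if x \<in> A then f x else 0)"
  by (metis subset_singleton_iff empty_iff singletonI sum.empty sum.insert empty_iff finite.emptyI add.right_neutral)

lemma comm:
  assumes L: "la0 \<in> Lam l r" "la1 \<in> Lam l r" "la2 \<in> Lam l r"
    and a: "a1 \<in> Sc la1" "a2 \<in> Sc la2"
  shows "\<exists>B. comp l r Sc la0 (mult a2 a1) = sc B (comp l r Sc la0 (mult a1 a2))"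
proof (cases "la0 \<in> fusL l r la2 la1")
  case True
  have "la1 \<in> AL l r la0 la2 la1 lam0"
    using True L by (auto simp: AL_iff fusL_right0 fusL_def lam0_def fus_right0)
  from FA4[OF L(1,2,3) lam0_Lam a(1,2) one_in this]
  have eq: "comp l r Sc la0 (mult a2 (comp l r Sc la1 (mult a1 one))) =
    (\<Sum>la\<in>AL l r la0 la1 la2 lam0.
           sc (BL l r la la1 la0 la1 la2 lam0) (comp l r Sc la0 (mult a1 (comp l r Sc la (mult a2 one)))))" .
  have sub: "AL l r la0 la1 la2 lam0 \<subseteq> {la2}"
    using L by (auto simp: AL_iff fusL_right0)
  show ?thesis
  proof (cases "la2 \<in> AL l r la0 la1 la2 lam0")
    case T2: True
    have AL1: "AL l r la0 la1 la2 lam0 = {la2}" using sub T2 by blast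
    show ?thesis
      apply (rule exI[of _ "BL l r la2 la1 la0 la1 la2 lam0"])
      using eq by (simp add: AL1 unit2 comp_hom[OF a(1)] comp_hom[OF a(2)])
  next
    case F2: False
    have AL1: "AL l r la0 la1 la2 lam0 = {}" using sub F2 by blast
    show ?thesis
      apply (rule exI[of _ 0])
      using eq by (simp add: AL1 unit2 comp_hom[OF a(1)])
  qed
next
  case False
  then have "comp l r Sc la0 (mult a2 a1) = 0" using FA3[OF L(3,2) a(2,1) L(1)] by simp
  then show ?thesis by (intro exI[of _ 0]) simp
qed

lemma key:
  assumes L: "nu \<in> Lam l r" "rho \<in> Lam l r" "mu \<in> Lam l r" "ka \<in> Lam l r"
    and x: "x \<in> Sc nu" and a: "a \<in> Sc rho" and s: "s \<in> Sc ka"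
    and P: "\<forall>nu'\<in>Lam l r. \<forall>s'\<in>Sc nu'. comp l r Sc lam0 (mult s' x) = 0"
  shows "comp l r Sc lam0 (mult s (comp l r Sc mu (mult a x))) = 0"
proof -
  obtain B1 where B1: "comp l r Sc mu (mult a x) = sc B1 (comp l r Sc mu (mult x a))"
    using comm[OF L(3,1,2) x a] by blast
  have "comp l r Sc lam0 (mult s (comp l r Sc mu (mult x a))) = 0"
  proof (cases "mu \<in> AL l r lam0 ka nu rho")
    case True
    have "comp l r Sc lam0 (mult s (comp l r Sc mu (mult x a))) =
      (\<Sum>la\<in>AL l r lam0 nu ka rho.
           sc (BL l r la mu lam0 nu ka rho) (comp l r Sc lam0 (mult x (comp l r Sc la (mult s a)))))"
      by (rule FA4[OF lam0_Lam L(1,4,2) x s a True])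
    also have "\<dots> = 0"
    proof (rule sum.neutral, rule ballI)
      fix la assume la: "la \<in> AL l r lam0 nu ka rho"
      then have laL: "la \<in> Lam l r" by (rule AL_Lam)
      obtain B where "comp l r Sc lam0 (mult x (comp l r Sc la (mult s a))) =
         sc B (comp l r Sc lam0 (mult (comp l r Sc la (mult s a)) x))"
        using comm[OF lam0_Lam laL L(1) comp_in x] by blast
      moreover have "comp l r Sc lam0 (mult (comp l r Sc la (mult s a)) x) = 0"
        using P laL comp_in by blast
      ultimately show "sc (BL l r la mu lam0 nu ka rho) (comp l r Sc lam0 (mult x (comp l r Sc la (mult s a)))) = 0"
        by simp
    qed
    finally show ?thesis .
  next
    case False
    then consider "mu \<notin> fusL l r nu rho" | "lam0 \<notin> fusL l r ka mu"
      by (auto simp: AL_iff fusL_def lam0_Lam)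
    then show ?thesis
    proof cases
      case 1
      then have "comp l r Sc mu (mult x a) = 0" using FA3[OF L(1,2) x a L(3)] by simp
      then show ?thesis by (simp add: m_zero c_zero)
    next
      case 2
      then show ?thesis using FA3[OF L(4,3) s comp_in lam0_Lam] by simp
    qed
  qed
  then show ?thesis using B1 by (simp add: m_scale comp_scale)
qed

definition Mset where
  "Mset = {x. \<forall>mu\<in>Lam l r. \<forall>nu\<in>Lam l r. \<forall>s\<in>Sc nu. comp l r Sc lam0 (mult s (comp l r Sc mu x)) = 0}"

lemma Phi_hom: "module_hom sc sc (\<lambda>y. comp l r Sc lam0 (mult s (comp l r Sc mu y)))"
  by (simp add: module_hom_def module_hom_axioms_def module_axioms comp_add comp_scale m_add m_scale)

lemma M_ideal: assumes x: "x \<in> Mset" shows "mult a x \<in> Mset"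
  unfolding Mset_def
proof (intro CollectI ballI)
  fix mu nu s assume mu: "mu \<in> Lam l r" and nu: "nu \<in> Lam l r" and s: "s \<in> Sc nu"
  let ?P = "\<lambda>y. comp l r Sc lam0 (mult s (comp l r Sc mu y))"
  have "mult a x = mult (\<Sum>rho\<in>Lam l r. comp l r Sc rho a) (\<Sum>ka\<in>Lam l r. comp l r Sc ka x)"
    using comp_sum[of a] comp_sum[of x] by simp
  also have "\<dots> = (\<Sum>rho\<in>Lam l r. \<Sum>ka\<in>Lam l r. mult (comp l r Sc rho a) (comp l r Sc ka x))"
    by (simp only: module_hom.sum[OF lin2] module_hom.sum[OF lin1]) (rule sum.swap)
  finally have eq: "mult a x = (\<Sum>rho\<in>Lam l r. \<Sum>ka\<in>Lam l r. mult (comp l r Sc rho a) (comp l r Sc ka x))" .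
  have "?P (mult a x) = (\<Sum>rho\<in>Lam l r. \<Sum>ka\<in>Lam l r. ?P (mult (comp l r Sc rho a) (comp l r Sc ka x)))"
    unfolding eq by (simp only: module_hom.sum[OF Phi_hom])
  also have "\<dots> = 0"
  proof (intro sum.neutral ballI)
    fix rho ka assume rho: "rho \<in> Lam l r" and ka: "ka \<in> Lam l r"
    have P: "\<forall>nu'\<in>Lam l r. \<forall>s'\<in>Sc nu'. comp l r Sc lam0 (mult s' (comp l r Sc ka x)) = 0"
      using x ka unfolding Mset_def by blast
    show "?P (mult (comp l r Sc rho a) (comp l r Sc ka x)) = 0"
      by (rule key[OF ka rho mu nu comp_in comp_in s P])
  qed
  finally show "?P (mult a x) = 0" .
qed

lemma M_graded: assumes x: "x \<in> Mset" shows "comp l r Sc la x \<in> Mset"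
  using x unfolding Mset_def
  by (auto simp: comp_hom[OF comp_in] m_zero c_zero)

lemma M_subspace: "subspace Mset"
  unfolding subspace_def Mset_def
  using module_hom.zero[OF Phi_hom] module_hom.add[OF Phi_hom] module_hom.scale[OF Phi_hom]
  by simp

lemma one_notin: "one \<notin> Mset"
proof
  assume "one \<in> Mset"
  then have "comp l r Sc lam0 (mult one (comp l r Sc lam0 one)) = 0"
    unfolding Mset_def using lam0_Lam one_in by blast
  then show False using comp_hom[OF one_in] unit1 one_nz by simp
qed


lemma dim1:
  assumes simp: "\<forall>M. fa_ideal l r sc Sc mult M \<longrightarrow> M = {0} \<or> M = UNIV"
    and al: "al \<in> code_CS l r Sc"
  shows "dim (Sc (zero_c al)) = 1"
proof -
  have "fa_ideal l r sc Sc mult Mset"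
    unfolding fa_ideal_def graded_subspace_def using M_subspace M_graded M_ideal by blast
  then have M0: "Mset = {0}" using simp one_notin by blast
  define la where "la = zero_c al"
  have laL: "la \<in> Lam l r" using al by (auto simp: code_CS_def Z2vec_def Lam_def la_def zero_c_def)
  have "Sc la \<noteq> {0}" using al by (simp add: code_CS_def la_def)
  then obtain a where a: "a \<in> Sc la" "a \<noteq> 0" using subspace_0[OF subsp] by blast
  then have "a \<notin> Mset" using M0 by blast
  then obtain mu nu s where mu: "mu \<in> Lam l r" and nu: "nu \<in> Lam l r" and s: "s \<in> Sc nu"
    and ne: "comp l r Sc lam0 (mult s (comp l r Sc mu a)) \<noteq> 0"
    unfolding Mset_def by blast
  have "mu = la"
  proof (rule ccontr)
    assume "mu \<noteq> la"
    then have "comp l r Sc mu a = 0" using comp_hom[OF a(1)] by simp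
    then show False using ne by (simp add: m_zero c_zero)
  qed
  then have ne2: "comp l r Sc lam0 (mult s a) \<noteq> 0" using ne comp_hom[OF a(1)] by simp
  have "nu = la"
  proof (rule ccontr)
    assume "nu \<noteq> la"
    then have "lam0 \<notin> fusL l r nu la" using lam0_fusL[OF nu laL] by simp
    then show False using FA3[OF nu laL s a(1) lam0_Lam] ne2 by simp
  qed
  with s have s': "s \<in> Sc la" by simp
  obtain B where "comp l r Sc lam0 (mult s a) = sc B (comp l r Sc lam0 (mult a s))"
    using comm[OF lam0_Lam laL laL a(1) s'] by blast
  then have ne3: "comp l r Sc lam0 (mult a s) \<noteq> 0" using ne2 by auto
  have "comp l r Sc lam0 (mult a s) \<in> span {one}" using comp_in S0 by blast
  then obtain g where g: "comp l r Sc lam0 (mult a s) = sc g one" by (auto simp: span_singleton)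
  then have gnz: "g \<noteq> 0" using ne3 by auto
  have ALs: "AL l r la la la la = {lam0}"
  proof
    show "AL l r la la la la \<subseteq> {lam0}"
    proof
      fix x assume x: "x \<in> AL l r la la la la"
      show "x \<in> {lam0}"
      proof (simp, rule ext)
        fix i show "x i = lam0 i"
          using x zero_c_nz[of al i]
          by (cases "i < l + r"; cases "la i") (auto simp: AL_iff fusL_def Lam_def lam0_def la_def)
      qed
    qed
  next
    show "{lam0} \<subseteq> AL l r la la la la"
      using laL zero_c_nz[of al] lam0_Lam[of l r] by (auto simp: AL_iff fusL_def lam0_def fus_H0 fus_right0 la_def)
  qed
  define BB where "BB = BL l r lam0 lam0 la la la la"
  have BBnz: "BB \<noteq> 0" unfolding BB_def la_def by (rule BL_nz)
  have sub: "Sc la \<subseteq> span {a}"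
  proof
    fix b assume b: "b \<in> Sc la"
    have "comp l r Sc lam0 (mult b s) \<in> span {one}" using comp_in S0 by blast
    then obtain be where be: "comp l r Sc lam0 (mult b s) = sc be one" by (auto simp: span_singleton)
    have "lam0 \<in> AL l r la la la la" using ALs by simp
    from FA4[OF laL laL laL laL b a(1) s' this]
    have "comp l r Sc la (mult a (comp l r Sc lam0 (mult b s))) =
      sc BB (comp l r Sc la (mult b (comp l r Sc lam0 (mult a s))))"
      by (simp add: ALs BB_def)
    then have "sc be a = sc (BB * g) b"
      by (simp add: be g m_scale unit2 comp_scale comp_hom[OF a(1)] comp_hom[OF b])
    then have "sc (inverse (BB * g)) (sc be a) = sc (inverse (BB * g) * (BB * g)) b" by simp
    also have "inverse (BB * g) * (BB * g) = 1" using BBnz gnz by (simp add: field_simps)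
    finally have "sc (inverse (BB * g)) (sc be a) = b" by simp
    then have "b = sc (inverse (BB * g) * be) a" by simp
    then show "b \<in> span {a}" by (auto simp: span_singleton)
  qed
  have "span {a} \<subseteq> Sc la" using a(1) by (intro span_minimal subsp) auto
  with sub have "Sc la = span {a}" by blast
  moreover have "independent {a}" using a(2) by simp
  ultimately have "dim (Sc la) = card {a}"
    using dim_span_eq_card_independent by metis
  then show ?thesis by (simp add: la_def)
qed

end

theorem mainTheorem7:
  fixes sc :: "complex \<Rightarrow> 'v::ab_group_add \<Rightarrow> 'v"
    and Sc :: "(nat \<Rightarrow> IS) \<Rightarrow> 'v set"
    and mult :: "'v \<Rightarrow> 'v \<Rightarrow> 'v" and one :: 'v
  assumes "simple_framed_algebra l r sc Sc mult one"
  shows "\<forall>\<alpha>\<in>code_CS l r Sc. vector_space.dim sc (Sc (zero_c \<alpha>)) = 1"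
proof -
  have fa: "framed_algebra l r sc Sc mult one"
    and si: "\<forall>M. fa_ideal l r sc Sc mult M \<longrightarrow> M = {0} \<or> M = UNIV"
    using assms by (simp_all add: simple_framed_algebra_def)
  interpret FA l r sc Sc mult one by (rule FA.intro[OF fa])
  show ?thesis using dim1[OF si] by blast
qed

end
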